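(* Let $L>0$, $\mu>0$ and $0<\mu_{x}\le L$ be given, with $\kappa:=L/\mu\ge 2$. Then there exists a (quadratic) function $f:\mathbb{R}\times\mathbb{R}\to\mathbb{R}$ having a differential Stackelberg equilibrium $z^\ast$ with parameters $(L,\mu,\mu_{x})$ such that, whenever the stepsize ratio satisfies $r=\eta_y/\eta_x\le\kappa$, GDA with exact gradients does not converge locally to $z^\ast$, for every choice of stepsize $\eta_x>0$: that is, for every $\delta>0$ there is an initial point $z^0$ with $\|z^0-z^\ast\|_2\le\delta$ from which the GDA iterates do not converge to $z^\ast$.
   Context: Let $f:\mathbb{R}^n\times\mathbb{R}^m\to\mathbb{R}$ be twice continuously differentiable, and write $z=(x,y)$. For a point $z^\ast=(x^\ast,y^\ast)$ write the Hessian as $\nabla^2 f(z^\ast)=\begin{pmatrix} C & B\\ B^\top & -A\end{pmatrix}$ with $C=\nabla^2_{xx}f(z^\ast)$, $B=\nabla^2_{xy}f(z^\ast)$, $-A=\nabla^2_{yy}f(z^\ast)$. The point $z^\ast$ is a differential Stackelberg equilibrium if $\nabla_x f(z^\ast)=0$, $\nabla_y f(z^\ast)=0$, $A\succ 0$ and $C+BA^{-1}B^\top\succ 0$. It is said to have parameters $(L,\mu,\mu_x)$ if $\max\{\|A\|_2,\|B\|_2,\|C\|_2\}\le L$, $\mu=\lambda_{\min}(A)$ and $\mu_x=\min\{L,\lambda_{\min}(C+BA^{-1}B^\top)\}$; set $\kappa=L/\mu$, $\kappa_x=L/\mu_x$. GDA with stepsizes $\eta_x,\eta_y>0$ and exact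 gradients is the iteration $x^{k+1}=x^k-\eta_x\nabla_x f(x^k;y^k)$, $y^{k+1}=y^k+\eta_y\nabla_y f(x^k;y^k)$; the stepsize ratio is $r=\eta_y/\eta_x$. *)

theory Defs
  imports "HOL-Analysis.Analysis"
begin

definition px :: "(real \<times> real \<Rightarrow> real) \<Rightarrow> real \<times> real \<Rightarrow> real" where
  "px f z = deriv (\<lambda>t. f (t, snd z)) (fst z)"

definition py :: "(real \<times> real \<Rightarrow> real) \<Rightarrow> real \<times> real \<Rightarrow> real" where
  "py f z = deriv (\<lambda>t. f (fst z, t)) (snd z)"

definition partially_differentiable :: "(real \<times> real \<Rightarrow> real) \<Rightarrow> bool" where
  "partially_differentiable f \<longleftrightarrow>
     (\<forall>z. (\<lambda>t. f (t, snd z)) differentiable (at (fst z))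
        \<and> (\<lambda>t. f (fst z, t)) differentiable (at (snd z)))"

definition C2 :: "(real \<times> real \<Rightarrow> real) \<Rightarrow> bool" where
  "C2 f \<longleftrightarrow> partially_differentiable f
     \<and> partially_differentiable (px f) \<and> partially_differentiable (py f)
     \<and> continuous_on UNIV f
     \<and> continuous_on UNIV (px f) \<and> continuous_on UNIV (py f)
     \<and> continuous_on UNIV (px (px f)) \<and> continuous_on UNIV (py (px f))
     \<and> continuous_on UNIV (px (py f)) \<and> continuous_on UNIV (py (py f))"

definition hessC :: "(real \<times> real \<Rightarrow> real) \<Rightarrow> real \<times> real \<Rightarrow> real" where
  "hessC f z = px (px f) z"

definition hessB :: "(real \<times> real \<Rightarrow> real) \<Rightarrow> real \<times> real \<Rightarrow> real" where
  "hessB f z = py (px f) z"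

definition hessA :: "(real \<times> real \<Rightarrow> real) \<Rightarrow> real \<times> real \<Rightarrow> real" where
  "hessA f z = - py (py f) z"

definition diff_stackelberg :: "(real \<times> real \<Rightarrow> real) \<Rightarrow> real \<times> real \<Rightarrow> bool" where
  "diff_stackelberg f z \<longleftrightarrow> px f z = 0 \<and> py f z = 0 \<and> hessA f z > 0
     \<and> hessC f z + hessB f z * inverse (hessA f z) * hessB f z > 0"

text \<open>DSE with parameters (L, mu, mu_x); the spectral norm of a 1x1 matrix is
  the absolute value, and lambda_min is the entry itself.\<close>

definition dse_params :: "(real \<times> real \<Rightarrow> real) \<Rightarrow> real \<times> real \<Rightarrow> real \<Rightarrow> real \<Rightarrow> real \<Rightarrow> bool" where
  "dse_params f z L \<mu> \<mu>x \<longleftrightarrow> diff_stackelberg f z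
     \<and> max \<bar>hessA f z\<bar> (max \<bar>hessB f z\<bar> \<bar>hessC f z\<bar>) \<le> L
     \<and> \<mu> = hessA f z
     \<and> \<mu>x = min L (hessC f z + hessB f z * inverse (hessA f z) * hessB f z)"

primrec gda :: "(real \<times> real \<Rightarrow> real) \<Rightarrow> real \<Rightarrow> real \<Rightarrow> real \<times> real \<Rightarrow> nat \<Rightarrow> real \<times> real" where
  "gda f \<eta>x \<eta>y z0 0 = z0"
| "gda f \<eta>x \<eta>y z0 (Suc k) =
     (let z = gda f \<eta>x \<eta>y z0 k in
      (fst z - \<eta>x * px f z, snd z + \<eta>y * py f z))"

definition is_quadratic :: "(real \<times> real \<Rightarrow> real) \<Rightarrow> bool" where
  "is_quadratic f \<longleftrightarrow> (\<exists>a b c d e g. \<forall>x y.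
     f (x, y) = a * x^2 + b * x * y + c * y^2 + d * x + e * y + g)"

end

theory Submission
  imports Defs
begin

definition Q :: "real \<Rightarrow> real \<Rightarrow> real \<Rightarrow> real \<Rightarrow> real \<Rightarrow> real \<Rightarrow> real \<times> real \<Rightarrow> real" where
  "Q p q s d e g = (\<lambda>z. p*(fst z)^2 + q * fst z * snd z + s*(snd z)^2 + d* fst z + e* snd z + g)"

lemma px_Q: "px (Q p q s d e g) = Q 0 0 0 (2*p) q d"
proof (rule ext)
  fix z :: "real \<times> real"
  have "((\<lambda>t. Q p q s d e g (t, snd z)) has_field_derivative Q 0 0 0 (2*p) q d z) (at (fst z))"
    unfolding Q_def by (auto intro!: derivative_eq_intros simp: algebra_simps)
  then show "px (Q p q s d e g) z = Q 0 0 0 (2*p) q d z"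
    unfolding px_def by (rule DERIV_imp_deriv)
qed

lemma py_Q: "py (Q p q s d e g) = Q 0 0 0 q (2 * s) e"
proof (rule ext)
  fix z :: "real \<times> real"
  have "((\<lambda>t. Q p q s d e g (fst z, t)) has_field_derivative Q 0 0 0 q (2 * s) e z) (at (snd z))"
    unfolding Q_def by (auto intro!: derivative_eq_intros simp: algebra_simps)
  then show "py (Q p q s d e g) z = Q 0 0 0 q (2 * s) e z"
    unfolding py_def by (rule DERIV_imp_deriv)
qed

lemma pd_Q: "partially_differentiable (Q p q s d e g)"
  unfolding partially_differentiable_def Q_def
  by (auto intro!: derivative_intros)

lemma cont_Q: "continuous_on UNIV (Q p q s d e g)"
  unfolding Q_def by (auto intro!: continuous_intros)

lemma C2_Q: "C2 (Q p q s d e g)"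
  unfolding C2_def px_Q py_Q by (simp add: pd_Q cont_Q)

theorem theorem1:
  fixes L \<mu> \<mu>x :: real
  assumes "L > 0" and "\<mu> > 0" and "0 < \<mu>x" and "\<mu>x \<le> L" and "L / \<mu> \<ge> 2"
  shows "\<exists>(f :: real \<times> real \<Rightarrow> real) zs. is_quadratic f \<and> C2 f \<and> dse_params f zs L \<mu> \<mu>x
     \<and> (\<forall>\<eta>x \<eta>y. \<eta>x > 0 \<longrightarrow> \<eta>y > 0 \<longrightarrow> \<eta>y / \<eta>x \<le> L / \<mu> \<longrightarrow>
          (\<forall>\<delta>>0. \<exists>z0. norm (z0 - zs) \<le> \<delta> \<and> \<not> (gda f \<eta>x \<eta>y z0 \<longlonglongrightarrow> zs)))"
proof -
  define b where "b = sqrt (\<mu> * (\<mu>x + L))"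
  define f where "f = Q (-L/2) b (-\<mu>/2) 0 0 0"
  have b2: "b * b = \<mu> * (\<mu>x + L)" unfolding b_def using assms
    by (simp add: real_sqrt_mult_self)
  have b0: "b \<ge> 0" unfolding b_def using assms by simp
  have 2: "2 * \<mu> \<le> L" using assms by (simp add: field_simps)
  have bL: "b \<le> L"
  proof -
    have "\<mu> * (\<mu>x + L) \<le> \<mu> * (2*L)" using assms by (intro mult_left_mono) auto
    also have "\<dots> = (2*\<mu>) * L" by simp
    also have "\<dots> \<le> L * L" using 2 assms by (intro mult_right_mono) auto
    finally have "\<mu> * (\<mu>x + L) \<le> L * L" .
    then have "b \<le> sqrt (L*L)" unfolding b_def by (rule real_sqrt_le_mono)
    then show ?thesis using assms by simp
  qed
  have pxf: "px f = (\<lambda>z. -L * fst z + b * snd z)" unfolding f_def px_Q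
    by (auto simp: Q_def)
  have pyf: "py f = (\<lambda>z. b * fst z - \<mu> * snd z)" unfolding f_def py_Q
    by (auto simp: Q_def)
  have hC: "hessC f z = -L" for z unfolding hessC_def f_def px_Q by (simp add: Q_def)
  have hB: "hessB f z = b" for z unfolding hessB_def f_def px_Q py_Q by (simp add: Q_def)
  have hA: "hessA f z = \<mu>" for z unfolding hessA_def f_def py_Q by (simp add: Q_def)
  have s: "-L + b * inverse \<mu> * b = \<mu>x" using assms b2
    by (simp add: field_simps)
  have quad: "is_quadratic f" unfolding is_quadratic_def f_def Q_def
    by (rule exI[of _ "-L/2"], rule exI[of _ b], rule exI[of _ "-\<mu>/2"],
        rule exI[of _ 0], rule exI[of _ 0], rule exI[of _ 0]) simp
  have dse: "dse_params f (0,0) L \<mu> \<mu>x"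
    unfolding dse_params_def diff_stackelberg_def hC hB hA s
    using assms b0 bL 2 by (simp add: pxf pyf)
  have nc: "\<exists>z0. norm (z0 - (0,0)) \<le> \<delta> \<and> \<not> (gda f \<eta>x \<eta>y z0 \<longlonglongrightarrow> (0,0))"
    if ex: "\<eta>x > 0" and ey: "\<eta>y > 0" and r: "\<eta>y / \<eta>x \<le> L / \<mu>" and d: "\<delta> > 0"
    for \<eta>x \<eta>y \<delta>
  proof (rule ccontr)
    assume H: "\<not> ?thesis"
    define u where "u = gda f \<eta>x \<eta>y (\<delta>, 0)"
    define v where "v = gda f \<eta>x \<eta>y (0, \<delta>)"
    have uc: "u \<longlonglongrightarrow> (0,0)" using H d unfolding u_def by auto
    have vc: "v \<longlonglongrightarrow> (0,0)" using H d unfolding v_def by auto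
    define D where "D = (1 + \<eta>x * L) * (1 - \<eta>y * \<mu>) + \<eta>x * \<eta>y * (b*b)"
    have r': "\<eta>y * \<mu> \<le> \<eta>x * L" using r ex assms by (simp add: field_simps)
    have "D = 1 + (\<eta>x * L - \<eta>y * \<mu>) + \<eta>x * \<eta>y * \<mu> * \<mu>x"
      unfolding D_def b2 by (simp add: algebra_simps)
    moreover have "\<eta>x * \<eta>y * \<mu> * \<mu>x \<ge> 0" using ex ey assms by simp
    ultimately have D1: "D \<ge> 1" using r' by linarith
    have det: "fst (u k) * snd (v k) - snd (u k) * fst (v k) = D^k * (\<delta>*\<delta>)" for k
    proof (induction k)
      case 0 then show ?case by (simp add: u_def v_def)
    next
      case (Suc k)
      have "fst (u (Suc k)) * snd (v (Suc k)) - snd (u (Suc k)) * fst (v (Suc k))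
          = D * (fst (u k) * snd (v k) - snd (u k) * fst (v k))"
        unfolding u_def v_def D_def by (simp add: Let_def pxf pyf algebra_simps)
      then show ?case using Suc by simp
    qed
    have lim: "(\<lambda>k. fst (u k) * snd (v k) - snd (u k) * fst (v k)) \<longlonglongrightarrow>
        fst (0::real,0::real) * snd (0::real,0::real) - snd (0::real,0::real) * fst (0::real,0::real)"
      by (intro tendsto_intros uc vc)
    have "\<forall>n\<ge>0. \<delta>*\<delta> \<le> fst (u n) * snd (v n) - snd (u n) * fst (v n)"
    proof (intro allI impI)
      fix n :: nat
      have "1 \<le> D^n" using D1 by (simp add: one_le_power)
      then have "1 * (\<delta>*\<delta>) \<le> D^n * (\<delta>*\<delta>)" using d by (intro mult_right_mono) auto
      then show "\<delta>*\<delta> \<le> fst (u n) * snd (v n) - snd (u n) * fst (v n)" using det by simp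
    qed
    then have "\<delta>*\<delta> \<le> 0" using LIMSEQ_le_const[OF lim] by auto
    then show False using d mult_pos_pos[OF d d] by linarith
  qed
  show ?thesis
    by (rule exI[of _ f], rule exI[of _ "(0,0)"]) (use quad dse nc in \<open>auto simp: C2_Q f_def\<close>)
qed

end
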